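(* For every $0\le j\le n$, every player $i\in[n]$ and every transition $\mathbf e\in\mathcal E_{\ge j}$, we have $\lambda^{j^*}_i(\mathbf e)\le|V|\cdot\kappa$, where $\kappa=\max_{e\in E}\ell_e(n)$.
   Context: Dynamic NCG $(\mathcal A,n)$: arena $\mathcal A=(V,E,\mathsf{src},\mathsf{tgt})$, $V$ finite, $E$ a partial function from $V\times V$ to non-decreasing piecewise-affine functions $\mathbb N\to\mathbb N$ (edge $e$ has cost $\ell_e$); $\mathsf{tgt}$ has only a self-loop of cost $0$ and is reachable from all states; players $[n]$. Configurations are maps $[n]\to V$; $c_{\mathsf{tgt}}$ maps all to $\mathsf{tgt}$. A move vector $(e_i)_i$ from $c$ gives the transition $(c,w,c')$, $c'(i)$ the target of $e_i$, $w(i)=\ell_{e_i}(u_i)$ with $u_i=|\{l:e_l=e_i\}|$; $\mathrm{cost}_i(c,c')=w(i)$; $T$ is the set of transitions; $c\Rightarrow c'$ means $(c,w,c')\in T$. For a path $\rho=(t_k)$, $\rho_{\ge k}$ is its suffix from $t_k$ and $\mathrm{cost}_i(\rho)$ the total payment of $i$. $\mathrm{dev}_i(c,c')=\{c''\mid c\Rightarrow c'',\ c''(l)=c'(l)\ \forall l\ne i\}$. $X_m$: configurations with exactly $m$ players at $\mathsf{tgt}$; $X_{\ge m}=\bigcup_{m'\ge m}X_{m'}$; $\mathcal E_m$, $\mathcal E_{\ge m}$: transitions $(c,w,c')$ with $c\in X_m$, resp. $c\in X_{\ge m}$. For $\lambda=(\lambda_i)$, $\lambda_i:\mathcal E_{\ge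 m}\to\mathbb N\cup\{\pm\infty\}$, and $c\in X_{\ge m}$, $\Lambda_\lambda(c)$ is the set of paths $\rho=(t_k)$ from $c$ visiting $c_{\mathsf{tgt}}$ with $\mathrm{cost}_i(\rho_{\ge k})\le\lambda_i(t_k)$ for all $i,k$. Define $\lambda^{n^*}_i(c_{\mathsf{tgt}},0^n,c_{\mathsf{tgt}})=0$ (note $\mathcal E_{\ge n}$ consists only of the self-loop on $c_{\mathsf{tgt}}$). For $j<n$ the $\lambda^{j^*}$-building functions $\mu^k_i:\mathcal E_{\ge j}\to\mathbb N\cup\{\pm\infty\}$ are: $\mu^k_i=\lambda^{(j+1)^*}_i$ on $\mathcal E_{\ge j+1}$; for $\mathbf e=(c,w,c')\in\mathcal E_j$, $\mu^0_i(\mathbf e)=0$ if $c(i)=\mathsf{tgt}$ else $+\infty$; for $k>0$, $\mu^k_i(\mathbf e)=0$ if $c(i)=\mathsf{tgt}$, otherwise $\min_{c''\in\mathrm{dev}_i(c,c')}\sup_{\rho\in\Lambda_{\mu^{k-1}}(c'')}(\mathrm{cost}_i(c,c'')+\mathrm{cost}_i(\rho))$ if $\Lambda_{\mu^{k-1}}(\tilde c)\ne\emptyset$ for all $(c,\tilde w,\tilde c)\in T$, and $-\infty$ otherwise. $\lambda^{j^*}_i$ is the pointwise limit of $(\mu^k_i)_k$ as $k\to\infty$. *)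

theory Defs
  imports "HOL-Library.Extended_Real"
begin

type_synonym 'v edges = "'v \<Rightarrow> 'v \<Rightarrow> (nat \<Rightarrow> nat) option"

text \<open>Configurations of n players: lists of length n (player i is at position c!i, i<n).
  A transition (c,w,c') is determined by (c,c') since w is determined; we represent
  it by the pair (c,c').\<close>
type_synonym 'v transition = "'v list \<times> 'v list"

definition piecewise_affine :: "(nat \<Rightarrow> nat) \<Rightarrow> bool" where
  "piecewise_affine f \<longleftrightarrow> (\<exists>(m::nat) (t::nat \<Rightarrow> nat) (a::nat \<Rightarrow> real) (b::nat \<Rightarrow> real).
     t 0 = 0 \<and> (\<forall>k<m. t k < t (Suc k)) \<and>
     (\<forall>x k. k \<le> m \<and> t k \<le> x \<and> (k < m \<longrightarrow> x < t (Suc k)) \<longrightarrow>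
            real (f x) = a k * real x + b k))"

definition arena :: "'v set \<Rightarrow> 'v edges \<Rightarrow> 'v \<Rightarrow> 'v \<Rightarrow> bool" where
  "arena V E src tgt \<longleftrightarrow> finite V \<and> src \<in> V \<and> tgt \<in> V \<and>
     (\<forall>u v f. E u v = Some f \<longrightarrow> u \<in> V \<and> v \<in> V \<and> mono f \<and> piecewise_affine f) \<and>
     (\<forall>v f. E tgt v = Some f \<longleftrightarrow> v = tgt \<and> f = (\<lambda>_. 0)) \<and>
     (\<forall>u\<in>V. (u, tgt) \<in> {(x, y). E x y \<noteq> None}\<^sup>*)"

definition ecost :: "'v edges \<Rightarrow> 'v \<Rightarrow> 'v \<Rightarrow> nat \<Rightarrow> nat" where
  "ecost E u v k = (case E u v of Some f \<Rightarrow> f k | None \<Rightarrow> 0)"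

definition kappa :: "'v edges \<Rightarrow> nat \<Rightarrow> nat" where
  "kappa E n = Max {f n | u v f. E u v = Some f}"

definition ctgt :: "'v \<Rightarrow> nat \<Rightarrow> 'v list" where
  "ctgt tgt n = replicate n tgt"

definition is_trans :: "'v set \<Rightarrow> 'v edges \<Rightarrow> nat \<Rightarrow> 'v list \<Rightarrow> 'v list \<Rightarrow> bool" where
  "is_trans V E n c c' \<longleftrightarrow> length c = n \<and> length c' = n \<and> set c \<subseteq> V \<and>
     (\<forall>i<n. E (c!i) (c'!i) \<noteq> None)"

definition load :: "'v list \<Rightarrow> 'v list \<Rightarrow> nat \<Rightarrow> nat" where
  "load c c' i = card {l. l < length c \<and> c!l = c!i \<and> c'!l = c'!i}"

definition tcost :: "'v edges \<Rightarrow> 'v list \<Rightarrow> 'v list \<Rightarrow> nat \<Rightarrow> nat" where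
  "tcost E c c' i = ecost E (c!i) (c'!i) (load c c' i)"

definition numtgt :: "'v \<Rightarrow> 'v list \<Rightarrow> nat" where
  "numtgt tgt c = card {i. i < length c \<and> c!i = tgt}"

definition dev :: "'v set \<Rightarrow> 'v edges \<Rightarrow> nat \<Rightarrow> nat \<Rightarrow> 'v list \<Rightarrow> 'v list \<Rightarrow> 'v list set" where
  "dev V E n i c c' = {c''. is_trans V E n c c'' \<and> (\<forall>l<n. l \<noteq> i \<longrightarrow> c''!l = c'!l)}"

definition is_path :: "'v set \<Rightarrow> 'v edges \<Rightarrow> nat \<Rightarrow> 'v list \<Rightarrow> (nat \<Rightarrow> 'v list) \<Rightarrow> bool" where
  "is_path V E n c p \<longleftrightarrow> p 0 = c \<and> (\<forall>k. is_trans V E n (p k) (p (Suc k)))"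

definition hit :: "'v \<Rightarrow> nat \<Rightarrow> (nat \<Rightarrow> 'v list) \<Rightarrow> nat" where
  "hit tgt n p = (LEAST k. p k = ctgt tgt n)"

text \<open>cost_i(rho_{>=k}); after reaching c_tgt only the 0-cost self-loop is possible,
  so the (infinite) total equals the finite sum up to the first visit of c_tgt.\<close>
definition scost :: "'v edges \<Rightarrow> 'v \<Rightarrow> nat \<Rightarrow> (nat \<Rightarrow> 'v list) \<Rightarrow> nat \<Rightarrow> nat \<Rightarrow> nat" where
  "scost E tgt n p i k = (\<Sum>m\<in>{k..<hit tgt n p}. tcost E (p m) (p (Suc m)) i)"

definition Lambda :: "'v set \<Rightarrow> 'v edges \<Rightarrow> 'v \<Rightarrow> nat \<Rightarrow> (nat \<Rightarrow> 'v transition \<Rightarrow> ereal)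
                       \<Rightarrow> 'v list \<Rightarrow> (nat \<Rightarrow> 'v list) set" where
  "Lambda V E tgt n lam c = {p. is_path V E n c p \<and> (\<exists>k. p k = ctgt tgt n) \<and>
      (\<forall>i<n. \<forall>k. ereal (real (scost E tgt n p i k)) \<le> lam i (p k, p (Suc k)))}"

text \<open>The lambda^{j*}-building functions mu^k (lamnext = lambda^{(j+1)*}).\<close>
primrec mu_seq :: "'v set \<Rightarrow> 'v edges \<Rightarrow> 'v \<Rightarrow> nat \<Rightarrow> nat \<Rightarrow> (nat \<Rightarrow> 'v transition \<Rightarrow> ereal)
                    \<Rightarrow> nat \<Rightarrow> (nat \<Rightarrow> 'v transition \<Rightarrow> ereal)" where
  "mu_seq V E tgt n j lamnext 0 = (\<lambda>i (c, c').
      if Suc j \<le> numtgt tgt c then lamnext i (c, c')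
      else if c!i = tgt then 0 else \<infinity>)"
| "mu_seq V E tgt n j lamnext (Suc k) = (\<lambda>i (c, c').
      if Suc j \<le> numtgt tgt c then lamnext i (c, c')
      else if c!i = tgt then 0
      else if (\<forall>ct. is_trans V E n c ct \<longrightarrow>
                   Lambda V E tgt n (mu_seq V E tgt n j lamnext k) ct \<noteq> {})
      then Inf ((\<lambda>c''. Sup ((\<lambda>p. ereal (real (tcost E c c'' i + scost E tgt n p i 0)))
                        ` Lambda V E tgt n (mu_seq V E tgt n j lamnext k) c''))
                ` dev V E n i c c')
      else - \<infinity>)"

text \<open>lam_d d = lambda^{(n-d)*}.\<close>
primrec lam_d :: "'v set \<Rightarrow> 'v edges \<Rightarrow> 'v \<Rightarrow> nat \<Rightarrow> nat \<Rightarrow> (nat \<Rightarrow> 'v transition \<Rightarrow> ereal)" where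
  "lam_d V E tgt n 0 = (\<lambda>i e. 0)"
| "lam_d V E tgt n (Suc d) = (\<lambda>i e.
      lim (\<lambda>k. mu_seq V E tgt n (n - Suc d) (lam_d V E tgt n d) k i e))"

definition lamstar :: "'v set \<Rightarrow> 'v edges \<Rightarrow> 'v \<Rightarrow> nat \<Rightarrow> nat \<Rightarrow> nat \<Rightarrow> 'v transition \<Rightarrow> ereal" where
  "lamstar V E tgt n j = lam_d V E tgt n (n - j)"

end

theory Submission
  imports Defs
begin

definition Rel :: "'v edges \<Rightarrow> ('v \<times> 'v) set" where
  "Rel E = {(x, y). E x y \<noteq> None}"

definition hops :: "'v edges \<Rightarrow> 'v \<Rightarrow> 'v \<Rightarrow> nat" where
  "hops E tgt v = (LEAST m. (v, tgt) \<in> Rel E ^^ m)"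

lemma hops_ex:
  assumes "arena V E src tgt" "v \<in> V"
  shows "(v, tgt) \<in> Rel E ^^ hops E tgt v"
proof -
  have "(v, tgt) \<in> (Rel E)\<^sup>*" using assms unfolding arena_def Rel_def by blast
  then obtain m where "(v, tgt) \<in> Rel E ^^ m" using rtrancl_power by blast
  then show ?thesis unfolding hops_def by (rule LeastI)
qed

lemma hops_le:
  assumes "(v, tgt) \<in> Rel E ^^ m"
  shows "hops E tgt v \<le> m"
  unfolding hops_def using assms by (rule Least_le)

lemma hops_zero:
  assumes "arena V E src tgt" "v \<in> V" "hops E tgt v = 0"
  shows "v = tgt"
  using hops_ex[OF assms(1,2)] assms(3) by simp

lemma hops_tgt: "hops E tgt tgt = 0"
  using hops_le[where v=tgt and tgt=tgt and E=E and m=0] by simp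

lemma hops_step:
  assumes "arena V E src tgt" "v \<in> V" "hops E tgt v = Suc m"
  shows "\<exists>y f. E v y = Some f \<and> y \<in> V \<and> hops E tgt y = m"
proof -
  have vs: "(v, tgt) \<in> Rel E ^^ Suc m" using hops_ex[OF assms(1,2)] assms(3) by simp
  have "\<exists>y. (v, y) \<in> Rel E \<and> (y, tgt) \<in> Rel E ^^ m" by (rule relpow_Suc_D2[OF vs])
  then obtain y where y: "(v, y) \<in> Rel E" "(y, tgt) \<in> Rel E ^^ m" by blast
  then obtain f where f: "E v y = Some f" unfolding Rel_def by auto
  then have yV: "y \<in> V" using assms(1) unfolding arena_def by blast
  have "hops E tgt y \<le> m" using hops_le[OF y(2)] .
  moreover have "(v, tgt) \<in> Rel E ^^ Suc (hops E tgt y)"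
    using relpow_Suc_I2[OF y(1) hops_ex[OF assms(1) yV]] .
  then have "Suc m \<le> Suc (hops E tgt y)" using hops_le assms(3) by metis
  ultimately show ?thesis using f yV by auto
qed

lemma hops_range:
  assumes "arena V E src tgt"
  shows "\<forall>v\<in>V. hops E tgt v = m \<longrightarrow> {0..m} \<subseteq> hops E tgt ` V"
proof (induction m)
  case 0
  then show ?case by auto
next
  case (Suc m)
  show ?case
  proof (intro ballI impI)
    fix v assume v: "v \<in> V" "hops E tgt v = Suc m"
    then obtain y f where "E v y = Some f" "y \<in> V" "hops E tgt y = m"
      using hops_step[OF assms] by blast
    then have "{0..m} \<subseteq> hops E tgt ` V" using Suc by blast
    moreover have "Suc m \<in> hops E tgt ` V" using v by force
    ultimately show "{0..Suc m} \<subseteq> hops E tgt ` V"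
      by (metis atLeast0_atMost_Suc insert_subset)
  qed
qed

lemma hops_bound:
  assumes "arena V E src tgt" "v \<in> V"
  shows "hops E tgt v \<le> card V"
proof -
  have fin: "finite V" using assms unfolding arena_def by blast
  have "{0..hops E tgt v} \<subseteq> hops E tgt ` V" using hops_range[OF assms(1)] assms(2) by blast
  then have "card {0..hops E tgt v} \<le> card (hops E tgt ` V)"
    using fin card_mono by blast
  also have "\<dots> \<le> card V" using fin by (rule card_image_le)
  finally show ?thesis by simp
qed

lemma kappa_bound:
  assumes "arena V E src tgt" "E u v = Some f" "k \<le> n"
  shows "f k \<le> kappa E n"
proof -
  have fin: "finite V" using assms unfolding arena_def by blast
  have sub: "{f n | u v f. E u v = Some f} \<subseteq> (\<lambda>(u, v). the (E u v) n) ` (V \<times> V)"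
  proof
    fix x assume "x \<in> {f n | u v f. E u v = Some f}"
    then obtain u' v' g where "x = g n" "E u' v' = Some g" by blast
    moreover then have "u' \<in> V" "v' \<in> V" using assms(1) unfolding arena_def by blast+
    ultimately show "x \<in> (\<lambda>(u, v). the (E u v) n) ` (V \<times> V)" by force
  qed
  have "finite {f n | u v f. E u v = Some f}"
    using finite_subset[OF sub] fin by blast
  moreover have "f n \<in> {f n | u v f. E u v = Some f}" using assms(2) by blast
  ultimately have "f n \<le> kappa E n" unfolding kappa_def by (rule Max_ge)
  moreover have "mono f" using assms(1,2) unfolding arena_def by blast
  then have "f k \<le> f n" using assms(3) by (simp add: monoD)
  ultimately show ?thesis by simp
qed

lemma load_le: "load c c' i \<le> length c"
proof -
  have "{l. l < length c \<and> c!l = c!i \<and> c'!l = c'!i} \<subseteq> {..<length c}" by auto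
  then show ?thesis unfolding load_def using card_mono[of "{..<length c}"] by fastforce
qed

lemma tcost_bound:
  assumes "arena V E src tgt" "length c = n" "E (c!i) (c''!i) = Some f"
  shows "tcost E c c'' i \<le> kappa E n"
  using kappa_bound[OF assms(1) assms(3)] load_le[of c c'' i] assms(2,3)
  unfolding tcost_def ecost_def by simp

lemma Lambda_mono:
  assumes "\<And>i e. lam i e \<le> lam' i e"
  shows "Lambda V E tgt n lam c \<subseteq> Lambda V E tgt n lam' c"
  unfolding Lambda_def using assms order_trans by blast

lemma mu_dec:
  fixes lamnext :: "nat \<Rightarrow> 'v transition \<Rightarrow> ereal"
  shows "\<forall>i e. mu_seq V E tgt n j lamnext (Suc k) i e \<le> mu_seq V E tgt n j lamnext k i e"
proof (induction k)
  case 0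
  show ?case by (auto split: prod.splits)
next
  case (Suc k)
  let ?m = "mu_seq V E tgt n j lamnext"
  show ?case
  proof (intro allI)
    fix i and e :: "'v transition"
    obtain c c' where e: "e = (c, c')" by (cases e)
    have L: "\<And>x. Lambda V E tgt n (?m (Suc k)) x \<subseteq> Lambda V E tgt n (?m k) x"
      by (rule Lambda_mono) (use Suc in blast)
    show "?m (Suc (Suc k)) i e \<le> ?m (Suc k) i e"
    proof (cases "Suc j \<le> numtgt tgt c \<or> c!i = tgt")
      case True
      then show ?thesis using e by auto
    next
      case False
      show ?thesis
      proof (cases "\<forall>ct. is_trans V E n c ct \<longrightarrow> Lambda V E tgt n (?m (Suc k)) ct \<noteq> {}")
        case False2: False
        have "?m (Suc (Suc k)) i (c, c') = - \<infinity>"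
          by (subst mu_seq.simps(2)) (use False False2 in \<open>auto simp del: mu_seq.simps\<close>)
        then show ?thesis using e by simp
      next
        case True2: True
        then have True3: "\<forall>ct. is_trans V E n c ct \<longrightarrow> Lambda V E tgt n (?m k) ct \<noteq> {}"
          using L by blast
        have "(INF c''\<in>dev V E n i c c'. SUP p\<in>Lambda V E tgt n (?m (Suc k)) c''.
                 ereal (real (tcost E c c'' i + scost E tgt n p i 0)))
              \<le> (INF c''\<in>dev V E n i c c'. SUP p\<in>Lambda V E tgt n (?m k) c''.
                 ereal (real (tcost E c c'' i + scost E tgt n p i 0)))"
          by (rule INF_mono, rule bexI[where x = "_"], rule SUP_subset_mono[OF L], auto)
        moreover have "?m (Suc (Suc k)) i (c, c') = (INF c''\<in>dev V E n i c c'. SUP p\<in>Lambda V E tgt n (?m (Suc k)) c''.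
                 ereal (real (tcost E c c'' i + scost E tgt n p i 0)))"
          by (subst mu_seq.simps(2)) (use False True2 in \<open>simp del: mu_seq.simps\<close>)
        moreover have "?m (Suc k) i (c, c') = (INF c''\<in>dev V E n i c c'. SUP p\<in>Lambda V E tgt n (?m k) c''.
                 ereal (real (tcost E c c'' i + scost E tgt n p i 0)))"
          by (subst mu_seq.simps(2)) (use False True3 in \<open>simp del: mu_seq.simps\<close>)
        ultimately show ?thesis using e by simp
      qed
    qed
  qed
qed


lemma mu_bound:
  fixes lamnext :: "nat \<Rightarrow> 'v transition \<Rightarrow> ereal"
  assumes ar: "arena V E src tgt"
    and Q: "\<forall>i<n. \<forall>c c'. is_trans V E n c c' \<longrightarrow>
              lamnext i (c, c') \<le> ereal (real (hops E tgt (c!i) * kappa E n))"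
  shows "\<forall>i<n. \<forall>c c'. is_trans V E n c c' \<longrightarrow> hops E tgt (c!i) \<le> k \<longrightarrow>
     mu_seq V E tgt n j lamnext k i (c, c') \<le> ereal (real (hops E tgt (c!i) * kappa E n))"
proof (induction k)
  case 0
  show ?case
  proof (intro allI impI)
    fix i c c' assume i: "i < n" and tr: "is_trans V E n c c'" and h: "hops E tgt (c!i) \<le> 0"
    have "c!i \<in> V" using tr i unfolding is_trans_def by auto
    then have "c!i = tgt" using hops_zero[OF ar] h by simp
    then show "mu_seq V E tgt n j lamnext 0 i (c, c') \<le> ereal (real (hops E tgt (c!i) * kappa E n))"
      using Q i tr by auto
  qed
next
  case (Suc k)
  let ?m = "mu_seq V E tgt n j lamnext"
  let ?B = "\<lambda>c i. ereal (real (hops E tgt (c!i) * kappa E n))"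
  show ?case
  proof (intro allI impI)
    fix i c c' assume i: "i < n" and tr: "is_trans V E n c c'" and h: "hops E tgt (c!i) \<le> Suc k"
    have ciV: "c!i \<in> V" using tr i unfolding is_trans_def by auto
    show "?m (Suc k) i (c, c') \<le> ?B c i"
    proof (cases "Suc j \<le> numtgt tgt c")
      case True
      then show ?thesis using Q i tr by simp
    next
      case F1: False
      show ?thesis
      proof (cases "c!i = tgt")
        case True
        then show ?thesis using F1 by simp
      next
        case F2: False
        show ?thesis
        proof (cases "\<forall>ct. is_trans V E n c ct \<longrightarrow> Lambda V E tgt n (?m k) ct \<noteq> {}")
          case F3: False
          have "?m (Suc k) i (c, c') = - \<infinity>"
            by (subst mu_seq.simps(2)) (use F1 F2 F3 in \<open>auto simp del: mu_seq.simps\<close>)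
          then show ?thesis by simp
        next
          case T3: True
          have eq: "?m (Suc k) i (c, c') = (INF c''\<in>dev V E n i c c'. SUP p\<in>Lambda V E tgt n (?m k) c''.
                 ereal (real (tcost E c c'' i + scost E tgt n p i 0)))"
            by (subst mu_seq.simps(2)) (use F1 F2 T3 in \<open>simp del: mu_seq.simps\<close>)
          obtain m where hm: "hops E tgt (c!i) = Suc m"
            using hops_zero[OF ar ciV] F2 by (cases "hops E tgt (c!i)") auto
          obtain y f where yf: "E (c!i) y = Some f" "y \<in> V" "hops E tgt y = m"
            using hops_step[OF ar ciV hm] by blast
          define c'' where "c'' = c'[i := y]"
          have lc': "length c' = n" using tr unfolding is_trans_def by simp
          have c''i: "c''!i = y" using lc' i unfolding c''_def by simp
          have trc'': "is_trans V E n c c''"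
            using tr yf(1) lc' i unfolding is_trans_def c''_def
            by (auto simp: nth_list_update)
          have dev: "c'' \<in> dev V E n i c c'"
            using trc'' unfolding dev_def c''_def by auto
          have tc: "tcost E c c'' i \<le> kappa E n"
            using tcost_bound[OF ar _ yf(1)[folded c''i]] tr unfolding is_trans_def by simp
          have "(SUP p\<in>Lambda V E tgt n (?m k) c''.
                 ereal (real (tcost E c c'' i + scost E tgt n p i 0))) \<le> ?B c i"
          proof (rule SUP_least)
            fix p assume p: "p \<in> Lambda V E tgt n (?m k) c''"
            then have p0: "p 0 = c''" and ptr: "is_trans V E n (p 0) (p (Suc 0))"
              and pc: "ereal (real (scost E tgt n p i 0)) \<le> ?m k i (p 0, p (Suc 0))"
              using i unfolding Lambda_def is_path_def by blast+
            have "?m k i (p 0, p (Suc 0)) \<le> ereal (real (hops E tgt (p 0 ! i) * kappa E n))"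
              using Suc.IH i ptr p0 c''i yf(3) hm h by auto
            with pc have "ereal (real (scost E tgt n p i 0)) \<le> ereal (real (m * kappa E n))"
              using p0 c''i yf(3) by (metis order_trans)
            then have "scost E tgt n p i 0 \<le> m * kappa E n"
              by (simp only: ereal_less_eq(3) of_nat_le_iff)
            with tc have "tcost E c c'' i + scost E tgt n p i 0 \<le> hops E tgt (c!i) * kappa E n"
              using hm by simp
            then show "ereal (real (tcost E c c'' i + scost E tgt n p i 0)) \<le> ?B c i"
              by (simp only: ereal_less_eq(3) of_nat_le_iff)
          qed
          then show ?thesis unfolding eq using dev
            by (meson INF_lower order_trans)
        qed
      qed
    qed
  qed
qed

lemma lam_bound:
  assumes ar: "arena V E src tgt"
  shows "\<forall>i<n. \<forall>c c'. is_trans V E n c c' \<longrightarrow>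
              lam_d V E tgt n d i (c, c') \<le> ereal (real (hops E tgt (c!i) * kappa E n))"
proof (induction d)
  case 0
  then show ?case by simp
next
  case (Suc d)
  show ?case
  proof (intro allI impI)
    fix i c c' assume i: "i < n" and tr: "is_trans V E n c c'"
    let ?X = "\<lambda>k. mu_seq V E tgt n (n - Suc d) (lam_d V E tgt n d) k i (c, c')"
    have "decseq ?X"
      using mu_dec[of V E tgt n "n - Suc d" "lam_d V E tgt n d"]
      by (intro decseq_SucI) blast
    then have "?X \<longlonglongrightarrow> (INF k. ?X k)" by (rule LIMSEQ_INF)
    then have "lim ?X = (INF k. ?X k)" by (rule limI)
    also have "\<dots> \<le> ?X (hops E tgt (c!i))" by (rule INF_lower) simp
    also have "\<dots> \<le> ereal (real (hops E tgt (c!i) * kappa E n))"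
      using mu_bound[OF ar Suc.IH, of "hops E tgt (c!i)" "n - Suc d"] i tr by blast
    finally show "lam_d V E tgt n (Suc d) i (c, c') \<le> ereal (real (hops E tgt (c!i) * kappa E n))"
      by simp
  qed
qed

theorem corollaryC9:
  fixes V :: "'v set" and E :: "'v edges" and src tgt :: 'v and n j i :: nat
    and c c' :: "'v list"
  assumes "arena V E src tgt"
    and "j \<le> n"
    and "i < n"
    and "is_trans V E n c c'"
    and "j \<le> numtgt tgt c"
  shows "lamstar V E tgt n j i (c, c') \<le> ereal (real (card V * kappa E n))"
proof -
  have ciV: "c!i \<in> V" using assms(3,4) unfolding is_trans_def by auto
  have "lamstar V E tgt n j i (c, c') \<le> ereal (real (hops E tgt (c!i) * kappa E n))"
    unfolding lamstar_def using lam_bound[OF assms(1)] assms(3,4) by blast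
  also have "\<dots> \<le> ereal (real (card V * kappa E n))"
    using hops_bound[OF assms(1) ciV] by (simp add: mult_right_mono)
  finally show ?thesis .
qed

end
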